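(* Let $A$ be a finite abelian group of even order and $H$ a subgroup of $A$. If $H$ contains an element that is not a square in $A$, then $H$ is a subgroup perfect code of $A$.
   Context: $A$ is written additively with identity $0$. An element $x$ of $A$ is a square if $x=2y$ for some $y\in A$; a subset is square-free if it contains no squares. For a square-free $T\subseteq A$, the Cayley sum graph $\mathrm{CayS}(A,T)$ is the simple graph with vertex set $A$ in which distinct $x,y$ are adjacent iff $x+y\in T$. A subset $C$ of the vertex set of a graph is a perfect code if every vertex is at distance at most one from exactly one vertex of $C$. A subgroup $H$ of $A$ is a subgroup perfect code of $A$ if $H$ is a perfect code of $\mathrm{CayS}(A,T)$ for some square-free $T\subseteq A$ (the empty set allowed). *)

theory Defs
  imports Main
begin

text \<open>The abelian group A is the (finite) type 'a of class ab_group_add, written additively.\<close>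

definition is_square :: "'a::ab_group_add \<Rightarrow> bool" where
  "is_square x \<longleftrightarrow> (\<exists>y. x = y + y)"

definition square_free :: "'a::ab_group_add set \<Rightarrow> bool" where
  "square_free T \<longleftrightarrow> (\<forall>x\<in>T. \<not> is_square x)"

definition cays_adj :: "'a::ab_group_add set \<Rightarrow> 'a \<Rightarrow> 'a \<Rightarrow> bool" where
  "cays_adj T x y \<longleftrightarrow> x \<noteq> y \<and> x + y \<in> T"

definition perfect_code :: "('a \<Rightarrow> 'a \<Rightarrow> bool) \<Rightarrow> 'a set \<Rightarrow> 'a set \<Rightarrow> bool" where
  "perfect_code adj V C \<longleftrightarrow> C \<subseteq> V \<and> (\<forall>v\<in>V. \<exists>!c. c \<in> C \<and> (v = c \<or> adj v c))"

definition is_subgroup :: "'a::ab_group_add set \<Rightarrow> bool" where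
  "is_subgroup H \<longleftrightarrow> 0 \<in> H \<and> (\<forall>x\<in>H. \<forall>y\<in>H. x + y \<in> H) \<and> (\<forall>x\<in>H. - x \<in> H)"

definition subgroup_perfect_code :: "'a::ab_group_add set \<Rightarrow> bool" where
  "subgroup_perfect_code H \<longleftrightarrow> is_subgroup H \<and>
     (\<exists>T. square_free T \<and> perfect_code (cays_adj T) UNIV H)"

end

theory Submission
  imports Defs
begin

theorem lemma3p4:
  fixes H :: "'a::{ab_group_add, finite} set"
  assumes "even (card (UNIV :: 'a set))"
    and "is_subgroup H"
    and "\<exists>h\<in>H. \<not> is_square h"
  shows "subgroup_perfect_code H"
proof -
  have H0: "0 \<in> H" and Hadd: "\<And>x y. x \<in> H \<Longrightarrow> y \<in> H \<Longrightarrow> x + y \<in> H"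
    and Hneg: "\<And>x. x \<in> H \<Longrightarrow> - x \<in> H"
    using assms(2) unfolding is_subgroup_def by auto
  have Hdiff: "\<And>x y. x \<in> H \<Longrightarrow> y \<in> H \<Longrightarrow> x - y \<in> H"
    using Hadd Hneg by (metis diff_conv_add_uminus)
  obtain h where hH: "h \<in> H" and hns: "\<not> is_square h" using assms(3) by blast
  define p where "p t = (SOME s. s - t \<in> H \<and> \<not> is_square s)" for t
  have ex: "\<exists>s. s - t \<in> H \<and> \<not> is_square s" for t
  proof (cases "is_square t")
    case False
    then show ?thesis using H0 by (intro exI[of _ t]) simp
  next
    case True
    then obtain y where y: "t = y + y" unfolding is_square_def by blast
    have "\<not> is_square (t + h)"
    proof
      assume "is_square (t + h)"
      then obtain z where "t + h = z + z" unfolding is_square_def by blast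
      then have "h = (z - y) + (z - y)" using y by (simp add: algebra_simps)
      then show False using hns unfolding is_square_def by blast
    qed
    then show ?thesis using hH by (intro exI[of _ "t + h"]) simp
  qed
  have p1: "p t - t \<in> H" and p2: "\<not> is_square (p t)" for t
    using someI_ex[OF ex[of t]] unfolding p_def by auto
  have p3: "p t' = p t" if "t' - t \<in> H" for t t'
  proof -
    have "(\<lambda>s. s - t' \<in> H \<and> \<not> is_square s) = (\<lambda>s. s - t \<in> H \<and> \<not> is_square s)"
    proof (rule ext)
      fix s
      have "s - t = (s - t') + (t' - t)" "s - t' = (s - t) - (t' - t)" by simp_all
      then show "(s - t' \<in> H \<and> \<not> is_square s) = (s - t \<in> H \<and> \<not> is_square s)"
        using Hadd Hdiff that by metis
    qed
    then show ?thesis unfolding p_def by simp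
  qed
  define T where "T = {p t | t. t \<notin> H}"
  have sf: "square_free T" unfolding square_free_def T_def using p2 by auto
  have pc: "perfect_code (cays_adj T) UNIV H"
    unfolding perfect_code_def
  proof (intro conjI ballI)
    fix v :: 'a
    show "\<exists>!c. c \<in> H \<and> (v = c \<or> cays_adj T v c)"
    proof (cases "v \<in> H")
      case True
      show ?thesis
      proof (rule ex1I[of _ v])
        show "v \<in> H \<and> (v = v \<or> cays_adj T v v)" using True by simp
        fix c assume c: "c \<in> H \<and> (v = c \<or> cays_adj T v c)"
        show "c = v"
        proof (rule ccontr)
          assume "c \<noteq> v"
          then have "v + c \<in> T" using c unfolding cays_adj_def by auto
          then obtain t where t: "t \<notin> H" "v + c = p t" unfolding T_def by auto
          have "v + c \<in> H" using Hadd True c by blast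
          then have "p t - (p t - t) \<in> H" using Hdiff p1 t(2) by metis
          then show False using t(1) by simp
        qed
      qed
    next
      case False
      show ?thesis
      proof (rule ex1I[of _ "p v - v"])
        have "v + (p v - v) \<in> T" unfolding T_def using False by auto
        moreover have "v \<noteq> p v - v" using False p1 by metis
        ultimately show "p v - v \<in> H \<and> (v = p v - v \<or> cays_adj T v (p v - v))"
          using p1 unfolding cays_adj_def by auto
        fix c assume c: "c \<in> H \<and> (v = c \<or> cays_adj T v c)"
        then have "v + c \<in> T" using False unfolding cays_adj_def by auto
        then obtain t where t: "t \<notin> H" "v + c = p t" unfolding T_def by auto
        have "t - v = (p t - v) - (p t - t)" by simp
        moreover have "p t - v = c" using t(2) by (simp add: algebra_simps)
        ultimately have "t - v \<in> H" using Hdiff p1 c by metis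
        then have "p t = p v" using p3 by blast
        then show "c = p v - v" using t(2) by (simp add: algebra_simps)
      qed
    qed
  qed simp
  show ?thesis unfolding subgroup_perfect_code_def using assms(2) sf pc by blast
qed

end
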